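(* Let $k\ge2$. Consider the system of linear equations in the $k^2$ unknowns $(x_{ij})_{i,j=1}^k$: $\sum_{j=1}^k x_{ij}=p_i$ ($i=1,\dots,k$); $\sum_{i=1}^k x_{ij}=q_j$ ($j=1,\dots,k$); $x_{ii}=\min(p_i,q_i)$ ($i=1,\dots,k$); $x_{ii}+x_{ij}+x_{ji}+x_{jj}=\min(p_i+p_j,q_i+q_j)$ ($1\le i<j\le k$). The coefficient matrix of this system of $3k+\binom{k}{2}$ equations has rank $2k-1+\binom{k}{2}$.
   Context: $p=(p_1,\dots,p_k)$ and $q=(q_1,\dots,q_k)$ are probability vectors (nonnegative entries summing to 1); only the coefficient matrix (a 0/1 matrix) matters for the rank. *)

theory Defs
  imports "Jordan_Normal_Form.DL_Rank"
begin

text \<open>Unknowns x_ij (0-based i,j < k) are indexed by column i*k+j of the coefficient matrix.\<close>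

definition row_sum_eq :: "nat \<Rightarrow> nat \<Rightarrow> real vec" where
  "row_sum_eq k i = vec (k*k) (\<lambda>c. if c div k = i then 1 else 0)"

definition col_sum_eq :: "nat \<Rightarrow> nat \<Rightarrow> real vec" where
  "col_sum_eq k j = vec (k*k) (\<lambda>c. if c mod k = j then 1 else 0)"

definition diag_eq :: "nat \<Rightarrow> nat \<Rightarrow> real vec" where
  "diag_eq k i = vec (k*k) (\<lambda>c. if c = i*k+i then 1 else 0)"

definition pair_eq :: "nat \<Rightarrow> nat \<Rightarrow> nat \<Rightarrow> real vec" where
  "pair_eq k i j = vec (k*k) (\<lambda>c. if c \<in> {i*k+i, i*k+j, j*k+i, j*k+j} then 1 else 0)"

definition coeff_matrix :: "nat \<Rightarrow> real mat" where
  "coeff_matrix k = mat_of_rows (k*k)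
     (map (row_sum_eq k) [0..<k] @ map (col_sum_eq k) [0..<k] @ map (diag_eq k) [0..<k]
      @ concat (map (\<lambda>i. map (\<lambda>j. pair_eq k i j) [Suc i..<k]) [0..<k]))"

end

theory Submission imports Defs begin

lemma enc_div: "j < k \<Longrightarrow> (i*k+j) div (k::nat) = i" by simp
lemma enc_mod: "j < k \<Longrightarrow> (i*k+j) mod (k::nat) = j" by simp
lemma enc_lt: "i < k \<Longrightarrow> j < k \<Longrightarrow> i*k+j < k*(k::nat)"
proof -
  assume "i < k" "j < k"
  then have "i*k+j < i*k + k" by simp
  also have "... = (Suc i)*k" by simp
  also have "... \<le> k*k" using \<open>i<k\<close> by (metis Suc_leI mult.commute mult_le_mono1)
  finally show ?thesis .
qed
lemma enc_inj: "j < k \<Longrightarrow> j' < k \<Longrightarrow> (i*k+j = i'*k+j') = (i = i' \<and> j = (j'::nat))"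
  by (metis enc_div enc_mod)

lemma row_entry: "i < k \<Longrightarrow> j < k \<Longrightarrow> row_sum_eq k a $ (i*k+j) = (if i = a then 1 else 0)"
  unfolding row_sum_eq_def using enc_lt by simp
lemma col_entry: "i < k \<Longrightarrow> j < k \<Longrightarrow> col_sum_eq k b $ (i*k+j) = (if j = b then 1 else 0)"
  unfolding col_sum_eq_def using enc_lt by simp
lemma diag_entry: "i < k \<Longrightarrow> j < k \<Longrightarrow> a < k \<Longrightarrow> diag_eq k a $ (i*k+j) = (if i = a \<and> j = a then 1 else 0)"
  unfolding diag_eq_def using enc_lt enc_inj by simp
lemma pair_entry: "i < k \<Longrightarrow> j < k \<Longrightarrow> a < k \<Longrightarrow> b < k \<Longrightarrow>
   pair_eq k a b $ (i*k+j) = (if (i = a \<or> i = b) \<and> (j = a \<or> j = b) then 1 else 0)"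
  unfolding pair_eq_def using enc_lt enc_inj by auto

definition rows_list :: "nat \<Rightarrow> real vec list" where
 "rows_list k = map (row_sum_eq k) [0..<k] @ map (col_sum_eq k) [0..<k] @ map (diag_eq k) [0..<k]
      @ concat (map (\<lambda>i. map (\<lambda>j. pair_eq k i j) [Suc i..<k]) [0..<k])"

lemma coeff_def2: "coeff_matrix k = mat_of_rows (k*k) (rows_list k)"
  unfolding coeff_matrix_def rows_list_def ..

lemma rows_cases: "w \<in> set (rows_list k) \<Longrightarrow>
  (\<exists>a<k. w = row_sum_eq k a) \<or> (\<exists>a<k. w = col_sum_eq k a) \<or> (\<exists>a<k. w = diag_eq k a)
  \<or> (\<exists>a b. a < b \<and> b < k \<and> a < k \<and> w = pair_eq k a b)"
  unfolding rows_list_def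
  apply (simp only: set_append set_map set_concat Un_iff image_iff set_upt)
  apply (elim disjE bexE)
     apply auto[3]
  apply (intro disjI2)
  apply (auto simp: image_iff)
  apply (rule_tac x=x in exI, rule_tac x=xa in exI)
  apply simp
  done

lemma sum_tri: "(\<Sum>i<k. (k - Suc i)) = k choose 2"
proof (induction k)
  case 0 then show ?case by simp
next
  case (Suc k)
  have "(\<Sum>i<Suc k. (Suc k - Suc i)) = (\<Sum>i<Suc k. (k - i))" by simp
  also have "... = (\<Sum>i<k. (k - i))" by simp
  also have "... = (\<Sum>i<k. Suc (k - Suc i))" by (intro sum.cong) auto
  also have "... = (k choose 2) + k" unfolding Suc_eq_plus1[of "k - Suc _"] sum.distrib using Suc by simp
  also have "... = Suc k choose 2" by (simp add: numeral_2_eq_2)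
  finally show ?case .
qed

lemma len_rows: "length (rows_list k) = 3*k + (k choose 2)"
proof -
  have "length (concat (map (\<lambda>i. map (\<lambda>j. pair_eq k i j) [Suc i..<k]) [0..<k])) = (\<Sum>i<k. (k - Suc i))"
    by (simp add: length_concat comp_def sum_list_sum_nth atLeast0LessThan)
  then show ?thesis unfolding rows_list_def using sum_tri by simp
qed


definition E :: "nat \<Rightarrow> real vec \<Rightarrow> (nat \<Rightarrow> nat \<Rightarrow> real) \<Rightarrow> real" where
  "E k w x = (\<Sum>i<k. \<Sum>j<k. x i j * w $ (i*k+j))"

lemma E_cong: assumes "\<And>i j. i < k \<Longrightarrow> j < k \<Longrightarrow> w $ (i*k+j) = (if P i j then 1 else 0)"
  shows "E k w x = (\<Sum>i<k. \<Sum>j<k. if P i j then x i j else 0)"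
  unfolding E_def by (intro sum.cong refl) (simp add: assms)

lemma E_row: "a < k \<Longrightarrow> E k (row_sum_eq k a) x = (\<Sum>j<k. x a j)"
proof -
  assume a: "a < k"
  have "E k (row_sum_eq k a) x = (\<Sum>i<k. \<Sum>j<k. if i = a then x i j else 0)"
    by (rule E_cong) (simp add: row_entry)
  also have "... = (\<Sum>i<k. if i = a then (\<Sum>j<k. x i j) else 0)"
    by (intro sum.cong refl) auto
  also have "... = (\<Sum>j<k. x a j)" using a by (simp add: sum.delta')
  finally show ?thesis .
qed

lemma E_diag: "a < k \<Longrightarrow> E k (diag_eq k a) x = x a a"
proof -
  assume a: "a < k"
  have "E k (diag_eq k a) x = (\<Sum>i<k. \<Sum>j<k. if i = a \<and> j = a then x i j else 0)"
    by (rule E_cong) (simp add: diag_entry a)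
  also have "... = (\<Sum>i<k. if i = a then (\<Sum>j<k. if j = a then x i j else 0) else 0)"
    by (intro sum.cong refl) auto
  also have "... = x a a" using a by (simp add: sum.delta')
  finally show ?thesis .
qed

lemma E_pair: "a < b \<Longrightarrow> b < k \<Longrightarrow> E k (pair_eq k a b) x = x a a + x a b + x b a + x b b"
proof -
  assume ab: "a < b" "b < k"
  have "E k (pair_eq k a b) x = (\<Sum>i<k. \<Sum>j<k. if (i = a \<or> i = b) \<and> (j = a \<or> j = b) then x i j else 0)"
    using ab by (intro E_cong) (simp add: pair_entry)
  also have "... = (\<Sum>i<k. if i \<in> {a,b} then (\<Sum>j<k. if j \<in> {a,b} then x i j else 0) else 0)"
    by (intro sum.cong refl) auto
  also have "... = (\<Sum>i\<in>{..<k} \<inter> {a,b}. (\<Sum>j\<in>{..<k} \<inter> {a,b}. x i j))"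
    by (simp only: sum.inter_restrict[OF finite_lessThan] insert_iff singleton_iff empty_iff simp_thms)
  also have "{..<k} \<inter> {a,b} = {a,b}" using ab by auto
  finally show ?thesis using ab by simp
qed

lemma row_in: "a < k \<Longrightarrow> row_sum_eq k a \<in> set (rows_list k)" unfolding rows_list_def by auto
lemma diag_in: "a < k \<Longrightarrow> diag_eq k a \<in> set (rows_list k)" unfolding rows_list_def by auto
lemma pair_in: "a < b \<Longrightarrow> b < k \<Longrightarrow> pair_eq k a b \<in> set (rows_list k)" unfolding rows_list_def by force

lemma kernel_zero:
  assumes E0: "\<And>w. w\<in>set (rows_list k) \<Longrightarrow> E k w x = 0"
    and Z: "\<And>i j. 1 \<le> i \<Longrightarrow> i < j \<Longrightarrow> j < k \<Longrightarrow> x i j = 0"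
    and ij: "i < k" "j < k"
  shows "x i j = 0"
proof -
  have D: "x a a = 0" if "a < k" for a using E0[OF diag_in[OF that]] E_diag[OF that] by simp
  have P: "x a b + x b a = 0" if "a < b" "b < k" for a b
    using E0[OF pair_in[OF that]] E_pair[OF that] D[of a] D[of b] that by simp
  have Z2: "x b a = 0" if "1 \<le> a" "a < b" "b < k" for a b
    using P[of a b] Z[of a b] that by simp
  have R0: "x a 0 = 0" if "1 \<le> a" "a < k" for a
  proof -
    have "0 = (\<Sum>j<k. x a j)" using E0[OF row_in[OF that(2)]] E_row[OF that(2)] by simp
    also have "... = (\<Sum>j<k. if j = 0 then x a 0 else 0)"
    proof (intro sum.cong refl)
      fix j assume "j \<in> {..<k}"
      then show "x a j = (if j = 0 then x a 0 else 0)"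
        using D[of a] Z[of a j] Z2[of j a] that by (cases "j = 0"; cases "j < a"; cases "j = a") auto
    qed
    also have "... = x a 0" using that by (simp add: sum.delta')
    finally show ?thesis by simp
  qed
  show ?thesis
  proof (cases "i = j")
    case True then show ?thesis using D ij by simp
  next
    case False
    show ?thesis
    proof (cases "i = 0")
      case True
      then have "1 \<le> j" using False by simp
      then show ?thesis using P[of 0 j] R0[of j] True ij by simp
    next
      case i0: False
      show ?thesis
      proof (cases "j = 0")
        case True then show ?thesis using R0[of i] i0 ij by simp
      next
        case False
        then show ?thesis using Z[of i j] Z2[of j i] i0 \<open>i \<noteq> j\<close> ij by (cases "i < j") auto
      qed
    qed
  qed
qed

lemma span_identity:
  assumes w: "w \<in> set (rows_list k)" and ab: "0 < a" "a < b" "b < k"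
  shows "w $ (a*k+b) + (w $ (0*k+a) + w $ (b*k+0)) = w $ (a*k+0) + w $ (b*k+a) + w $ (0*k+b)"
proof -
  have k: "a < k" "b < k" "0 < k" using ab by auto
  from rows_cases[OF w] show ?thesis
  proof (elim disjE exE conjE)
    fix c assume "c < k" "w = row_sum_eq k c"
    then show ?thesis by (simp only: row_entry k)
  next
    fix c assume "c < k" "w = col_sum_eq k c"
    then show ?thesis by (simp only: col_entry k)
  next
    fix c assume "c < k" "w = diag_eq k c"
    then show ?thesis using ab by (simp only: diag_entry k) auto
  next
    fix c d assume "c < d" "d < k" "c < k" "w = pair_eq k c d"
    then show ?thesis by (simp only: pair_entry k) (simp add: conj_commute)
  qed
qed

lemma sum_suc: "(\<Sum>i<k. Suc i) = Suc k choose 2"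
proof (induction k)
  case 0 then show ?case by simp
next
  case (Suc k)
  then show ?case by (simp add: numeral_2_eq_2)
qed

definition II :: "nat \<Rightarrow> (nat \<times> nat) set" where
  "II k = (SIGMA i:{..<k}. {..i}) \<union> ({0} \<times> {1..<k})"

lemma II_alt: "II k = {(i,j). i < k \<and> j < k \<and> (i = 0 \<or> j \<le> i)}"
  unfolding II_def by auto

lemma card_II: "k \<ge> 1 \<Longrightarrow> card (II k) = 2*k - 1 + (k choose 2)"
proof -
  assume k: "k \<ge> 1"
  have d: "(SIGMA i:{..<k}. {..i}) \<inter> ({0} \<times> {1..<k}) = {}" by auto
  have "card (II k) = card (SIGMA i:{..<k}. {..i}) + card ({0::nat} \<times> {1..<k})"
    unfolding II_def by (rule card_Un_disjoint) (auto simp: d)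
  also have "card (SIGMA i:{..<k}. {..i}) = (\<Sum>i<k. Suc i)" by (simp add: card_SigmaI)
  also have "... = Suc k choose 2" by (rule sum_suc)
  also have "... = k + (k choose 2)" by (simp add: numeral_2_eq_2)
  finally show ?thesis using k by simp
qed

lemma col_entry_A:
  assumes "c < k*k" "r < length (rows_list k)"
  shows "col (coeff_matrix k) c $ r = rows_list k ! r $ c"
  using assms unfolding coeff_def2 by (simp add: mat_of_rows_index)

lemma rows_nth_row: "a < k \<Longrightarrow> rows_list k ! a = row_sum_eq k a"
  unfolding rows_list_def by (simp add: nth_append)
lemma rows_nth_col: "b < k \<Longrightarrow> rows_list k ! (k + b) = col_sum_eq k b"
  unfolding rows_list_def by (simp add: nth_append)

lemma len_ge: "2*k \<le> length (rows_list k)" using len_rows[of k] by simp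

lemma f_inj:
  assumes "i < k" "j < k" "i' < k" "j' < k"
    and eq: "col (coeff_matrix k) (i*k+j) = col (coeff_matrix k) (i'*k+j')"
  shows "i = i' \<and> j = j'"
proof -
  have e1: "col (coeff_matrix k) (a*k+b) $ i = (if a = i then 1 else 0)" if "a<k" "b<k" for a b
    using col_entry_A[of "a*k+b" k i] enc_lt[OF that] len_ge[of k] assms rows_nth_row[of i k] row_entry that
    by simp
  have e2: "col (coeff_matrix k) (a*k+b) $ (k+j) = (if b = j then 1 else 0)" if "a<k" "b<k" for a b
    using col_entry_A[of "a*k+b" k "k+j"] enc_lt[OF that] len_ge[of k] assms rows_nth_col[of j k] col_entry that
    by simp
  have "i' = i" using e1[of i j] e1[of i' j'] eq assms by (auto split: if_splits)
  moreover have "j' = j" using e2[of i j] e2[of i' j'] eq assms by (auto split: if_splits)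
  ultimately show ?thesis by simp
qed


theorem theoremS1:
  fixes k :: nat
  assumes "k \<ge> 2"
  shows "dim_row (coeff_matrix k) = 3*k + (k choose 2) \<and>
         vec_space.rank (dim_row (coeff_matrix k)) (coeff_matrix k) = 2*k - 1 + (k choose 2)"
proof
  define n where "n = length (rows_list k)"
  define A where "A = coeff_matrix k"
  have dr: "dim_row A = n" unfolding A_def n_def coeff_def2 by simp
  then show "dim_row (coeff_matrix k) = 3*k + (k choose 2)" unfolding A_def n_def using len_rows by simp
  have Acar: "A \<in> carrier_mat n (k*k)" unfolding A_def n_def coeff_def2 by simp
  interpret V: vec_space "TYPE(real)" n .
  define f where "f = (\<lambda>(i,j). col A (i*k+j))"
  define U where "U = f ` II k"
  have II_sub: "II k \<subseteq> {..<k} \<times> {..<k}" unfolding II_alt by auto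
  have colsin: "col A c \<in> set (cols A)" if "c < k*k" for c
    using that Acar by (metis carrier_matD(2) cols_length cols_nth nth_mem)
  have Ucols: "U \<subseteq> set (cols A)"
    unfolding U_def f_def II_alt using colsin enc_lt by auto
  have colscar: "set (cols A) \<subseteq> carrier_vec n" using Acar cols_dim by blast
  have Ucar: "U \<subseteq> carrier_vec n" using Ucols colscar by blast
  have inj: "inj_on f (II k)"
  proof (rule inj_onI)
    fix p q assume pq: "p \<in> II k" "q \<in> II k" "f p = f q"
    obtain i j i' j' where "p = (i,j)" "q = (i',j')" by fastforce
    then show "p = q" using pq f_inj[of i k j i' j'] II_sub unfolding f_def A_def by auto
  qed
  have fent: "f p $ r = rows_list k ! r $ (fst p * k + snd p)" if "p \<in> II k" "r < n" for p r
  proof -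
    obtain i j where p: "p = (i,j)" by fastforce
    have ij: "i < k" "j < k" using that II_sub p by auto
    have "col A (i*k+j) $ r = rows_list k ! r $ (i*k+j)"
      using col_entry_A[OF enc_lt[OF ij], of r] that(2) unfolding A_def n_def by simp
    then show ?thesis unfolding f_def p by simp
  qed
  have indep: "V.lin_indpt U"
  proof
    assume dep: "V.lin_dep U"
    have finU: "finite U" unfolding U_def II_def by auto
    obtain a v where a: "a \<in> U \<rightarrow> carrier class_ring" and lc: "V.lincomb a U = 0\<^sub>v n"
        and v: "v \<in> U" and av: "a v \<noteq> 0"
      using V.finite_lin_dep[OF finU dep] Ucar by auto
    define x where "x = (\<lambda>i j. if (i,j) \<in> II k then a (f (i,j)) else 0)"
    have Ex: "E k w x = 0" if w: "w \<in> set (rows_list k)" for w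
    proof -
      obtain r where r: "r < n" "w = rows_list k ! r" using w unfolding n_def by (metis in_set_conv_nth)
      have "E k w x = (\<Sum>p\<in>{..<k} \<times> {..<k}. x (fst p) (snd p) * w $ (fst p * k + snd p))"
        unfolding E_def by (simp add: sum.cartesian_product case_prod_beta)
      also have "... = (\<Sum>p\<in>II k. x (fst p) (snd p) * w $ (fst p * k + snd p))"
        by (rule sum.mono_neutral_right) (auto simp: II_sub x_def)
      also have "... = (\<Sum>p\<in>II k. a (f p) * f p $ r)"
        by (rule sum.cong) (auto simp: x_def fent r)
      also have "... = (\<Sum>u\<in>U. a u * u $ r)"
        unfolding U_def using sum.reindex[OF inj, of "\<lambda>u. a u * u $ r"] by simp
      also have "... = V.lincomb a U $ r" using V.lincomb_index[OF r(1) Ucar] by simp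
      also have "... = 0" using lc r by simp
      finally show ?thesis .
    qed
    have Z: "x i j = 0" if "1 \<le> i" "i < j" "j < k" for i j
      using that unfolding x_def II_alt by auto
    obtain p where p: "p \<in> II k" "v = f p" using v unfolding U_def by auto
    have "x (fst p) (snd p) = 0"
      by (rule kernel_zero[OF Ex Z]) (use p II_sub in auto)
    then show False using p av unfolding x_def by simp
  qed
  have fin: "f (i,j) \<in> U" if "(i,j) \<in> II k" for i j using that unfolding U_def by auto
  have fcar: "f (i,j) \<in> carrier_vec n" if "i < k" "j < k" for i j
    using colsin[OF enc_lt[OF that]] colscar unfolding f_def by auto
  have fd: "dim_vec (f (a,b)) = n" if "a < k" "b < k" for a b using fcar[OF that] by simp
  have span: "col A c \<in> V.span U" if c: "c < k*k" for c
  proof -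
    define i where "i = c div k"
    define j where "j = c mod k"
    have kpos: "0 < k" using assms by simp
    have ci: "c = i*k+j" unfolding i_def j_def by simp
    have ik: "i < k" "j < k" unfolding i_def j_def using c kpos by (auto simp: less_mult_imp_div_less)
    have cf: "col A c = f (i,j)" unfolding f_def ci by simp
    show ?thesis
    proof (cases "(i,j) \<in> II k")
      case True
      then show ?thesis using cf fin V.span_mem[OF Ucar] by auto
    next
      case False
      then have ij: "0 < i" "i < j" using ik unfolding II_alt by auto
      have I1: "(0,i) \<in> II k" "(j,0) \<in> II k" "(i,0) \<in> II k" "(j,i) \<in> II k" "(0,j) \<in> II k"
        using ik ij unfolding II_alt by auto
      have ident: "(f (0,i) + f (j,0)) + f (i,j) = (f (i,0) + f (j,i)) + f (0,j)"
      proof (rule eq_vecI)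
        show "dim_vec (f (0, i) + f (j, 0) + f (i, j)) = dim_vec (f (i, 0) + f (j, i) + f (0, j))"
          using fd ik kpos by simp
        fix r assume "r < dim_vec (f (i, 0) + f (j, i) + f (0, j))"
        then have r: "r < n" using fd ik kpos by simp
        have w: "rows_list k ! r \<in> set (rows_list k)" using r unfolding n_def by simp
        have e: "f (a,b) $ r = rows_list k ! r $ (a*k+b)" if "a < k" "b < k" for a b
          using col_entry_A[OF enc_lt[OF that], of r] r unfolding A_def n_def f_def by simp
        have sid: "rows_list k ! r $ (i*k+j) + (rows_list k ! r $ (0*k+i) + rows_list k ! r $ (j*k+0)) =
           rows_list k ! r $ (i*k+0) + rows_list k ! r $ (j*k+i) + rows_list k ! r $ (0*k+j)"
          by (rule span_identity[OF w ij ik(2)])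
        have "(f (0, i) + f (j, 0) + f (i, j)) $ r = f (0, i) $ r + f (j, 0) $ r + f (i, j) $ r"
          using fd ik kpos r by simp
        also have "... = f (i, 0) $ r + f (j, i) $ r + f (0, j) $ r"
          using sid e[of 0 i] e[of j 0] e[of i j] e[of i 0] e[of j i] e[of 0 j] ik kpos by simp
        also have "... = (f (i, 0) + f (j, i) + f (0, j)) $ r"
          using fd ik kpos r by simp
        finally show "(f (0, i) + f (j, 0) + f (i, j)) $ r = (f (i, 0) + f (j, i) + f (0, j)) $ r" .
      qed
      have s1: "f (0,i) + f (j,0) \<in> V.span U"
        using V.span_add1[OF Ucar] V.span_mem[OF Ucar] fin I1 by simp
      have s2: "(f (i,0) + f (j,i)) + f (0,j) \<in> V.span U"
        using V.span_add1[OF Ucar] V.span_mem[OF Ucar] fin I1 by simp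
      have "f (i,j) \<in> V.span U"
        using V.span_add[OF Ucar s1, of "f (i,j)"] fcar ik ident s2 by simp
      then show ?thesis using cf by simp
    qed
  qed
  have colsspan: "set (cols A) \<subseteq> V.span U"
  proof
    fix u assume "u \<in> set (cols A)"
    then obtain c where "c < k*k" "u = col A c" using Acar
      by (metis carrier_matD(2) cols_length cols_nth in_set_conv_nth)
    then show "u \<in> V.span U" using span by simp
  qed
  have maxi: "maximal U (\<lambda>T. T \<subseteq> set (cols A) \<and> V.lin_indpt T)"
    unfolding maximal_def
  proof (intro conjI allI impI)
    show "U \<subseteq> set (cols A)" by (rule Ucols)
    show "V.lin_indpt U" by (rule indep)
    fix B assume B: "U \<subseteq> B \<and> B \<subseteq> set (cols A) \<and> V.lin_indpt B"
    show "B = U"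
    proof (rule ccontr)
      assume "B \<noteq> U"
      then obtain y where y: "y \<in> B" "y \<notin> U" using B by auto
      have ycar: "y \<in> carrier_vec n" using y B colscar by auto
      have "y \<in> V.span U" using y B colsspan by auto
      then have "V.lin_dep (U \<union> {y})" using V.lin_dep_iff_in_span[OF Ucar indep _ y(2)] ycar by simp
      then have "V.lin_dep B" by (rule V.supset_ld_is_ld) (use y B in auto)
      then show False using B by simp
    qed
  qed
  have "V.rank A = card U" by (rule V.rank_card_indpt[OF Acar maxi])
  also have "... = card (II k)" unfolding U_def by (rule card_image[OF inj])
  also have "... = 2*k - 1 + (k choose 2)" using card_II assms by simp
  finally show "vec_space.rank (dim_row (coeff_matrix k)) (coeff_matrix k) = 2*k - 1 + (k choose 2)"
    using dr unfolding A_def by simp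
qed
end
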